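(* Let $f\in\{0,1\}^n$ have a $2$-tilde-error overlap of shift $r$ with error positions $i<j$ and operations $O_i,O_j$. Let $\tilde\beta_r(f)=\mathrm{pre}_r(f)\,O_j(f)$. Then $\tilde\beta_r(f)$ is not $f$-free if and only if the $2$-tilde-error overlap satisfies Condition$^\sim$. Here Condition$^\sim$ means: the overlap is of type RR or SS, $r$ is even, $j-i=r/2$, and $f[i..(i+r/2-1)]=f[j..(j+r/2-1)]$.
   Context: Words are over $\{0,1\}$. For $w$ of length $n$: $w[k]$ is its $k$-th symbol, $w[a..b]$ is the factor from position $a$ to $b$, $\mathrm{pre}_l(w)=w[1..l]$ and $\mathrm{suf}_l(w)=w[n-l+1..n]$. A word is $f$-free if it does not contain $f$ as a factor. Operations: the replacement $R_i$ flips the symbol at position $i$. The swap $S_i$ is defined when $w[i]\ne w[i+1]$ and exchanges these two symbols. $\mathrm{dist}_\sim(u,v)$ is the minimum number of replacements and swaps transforming $u$ into the equal-length word $v$. A tilde-transformation is minimal if it uses exactly $\mathrm{dist}_\sim$ operations and modifies each position at most once. $f$ has a $2$-tilde-error overlap of length $l=n-r$ (with $1\le l\le n-1$; $r$ is the shift) if $\mathrm{dist}_\sim(\mathrm{pre}_l(f),\mathrm{suf}_l(f))=2$. In that case fix a minimal tilde-transformation from $\mathrm{pre}_l(f)$ to $\mathrm{suf}_l(f)$. It consists of two operations $O_i\in\{R_i,S_i\}$ and $O_j\in\{R_j,S_j\}$ at positions $i<j$ (the error positions). The words $O_i(f)$ and $O_j(f)$ are obtained by applying these operations to $f$ at the same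 positions. The type is RR, SR, RS or SS according to whether $(O_i,O_j)$ is (replacement, replacement), (swap, replacement), (replacement, swap) or (swap, swap). *)

theory Defs
  imports Main "HOL-Library.Sublist"
begin

text \<open>Binary words are bool lists; positions are 1-indexed as in the paper:
  w[k] = w ! (k - 1).\<close>

datatype tilde_op = Rep nat | Swp nat

fun op_pos :: "tilde_op \<Rightarrow> nat" where
  "op_pos (Rep i) = i"
| "op_pos (Swp i) = i"

fun is_rep :: "tilde_op \<Rightarrow> bool" where
  "is_rep (Rep _) = True"
| "is_rep (Swp _) = False"

fun is_swp :: "tilde_op \<Rightarrow> bool" where
  "is_swp (Rep _) = False"
| "is_swp (Swp _) = True"

fun touched :: "tilde_op \<Rightarrow> nat set" where
  "touched (Rep i) = {i}"
| "touched (Swp i) = {i, Suc i}"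

fun op_defined :: "bool list \<Rightarrow> tilde_op \<Rightarrow> bool" where
  "op_defined w (Rep i) = (1 \<le> i \<and> i \<le> length w)"
| "op_defined w (Swp i) = (1 \<le> i \<and> i + 1 \<le> length w \<and> w ! (i - 1) \<noteq> w ! i)"

fun apply_op :: "bool list \<Rightarrow> tilde_op \<Rightarrow> bool list" where
  "apply_op w (Rep i) = w[i - 1 := \<not> w ! (i - 1)]"
| "apply_op w (Swp i) = w[i - 1 := w ! i, i := w ! (i - 1)]"

definition tilde_step :: "bool list \<Rightarrow> bool list \<Rightarrow> bool" where
  "tilde_step u v \<longleftrightarrow> (\<exists>op. op_defined u op \<and> v = apply_op u op)"

definition dist_tilde :: "bool list \<Rightarrow> bool list \<Rightarrow> nat" where
  "dist_tilde u v = (LEAST k. (tilde_step ^^ k) u v)"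

fun apply_seq :: "bool list \<Rightarrow> tilde_op list \<Rightarrow> bool list \<Rightarrow> bool" where
  "apply_seq u [] v = (u = v)"
| "apply_seq u (op # os) v = (op_defined u op \<and> apply_seq (apply_op u op) os v)"

definition minimal_tilde_transf :: "bool list \<Rightarrow> bool list \<Rightarrow> tilde_op list \<Rightarrow> bool" where
  "minimal_tilde_transf u v ops \<longleftrightarrow>
     length ops = dist_tilde u v \<and> apply_seq u ops v \<and>
     (\<forall>a < length ops. \<forall>b < length ops. a \<noteq> b \<longrightarrow> touched (ops ! a) \<inter> touched (ops ! b) = {})"

definition pre :: "nat \<Rightarrow> bool list \<Rightarrow> bool list" where
  "pre l w = take l w"

definition suf :: "nat \<Rightarrow> bool list \<Rightarrow> bool list" where
  "suf l w = drop (length w - l) w"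

text \<open>Factor w[a..b] (1-indexed, inclusive).\<close>
definition factor :: "bool list \<Rightarrow> nat \<Rightarrow> nat \<Rightarrow> bool list" where
  "factor w a b = take (Suc b - a) (drop (a - 1) w)"

definition free :: "bool list \<Rightarrow> bool list \<Rightarrow> bool" where
  "free f w \<longleftrightarrow> \<not> sublist f w"

end

theory Submission
  imports Defs
begin

lemma apply_op_len: "length (apply_op w op) = length w"
  by (cases op) auto

lemma apply_op_nth:
  assumes "op_defined w op" "k < length w"
  shows "apply_op w op ! k = (if Suc k \<in> touched op then \<not> w ! k else w ! k)"
  using assms
proof (cases op)
  case (Rep i)
  then show ?thesis using assms by (auto simp: nth_list_update)
next
  case (Swp i)
  then show ?thesis using assms
    by (cases "k = i"; cases "k = i - 1") (auto simp: nth_list_update)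
qed

lemma touched_range: "op_defined w op \<Longrightarrow> p \<in> touched op \<Longrightarrow> 1 \<le> p \<and> p \<le> length w"
  by (cases op) auto

lemma op_defined_transfer:
  assumes "op_defined w' op" "length w = length w'"
    "\<forall>p\<in>touched op. w ! (p - 1) = w' ! (p - 1)"
  shows "op_defined w op"
  using assms by (cases op) auto



lemma touched_pos: "p \<in> touched op \<Longrightarrow> op_pos op \<le> p \<and> p \<le> Suc (op_pos op)"
  by (cases op) auto

lemma pos_touched: "op_pos op \<in> touched op"
  by (cases op) auto

lemma RR: "1 \<le> (a::nat) \<Longrightarrow> a < b \<Longrightarrow> 0 < s \<Longrightarrow> 0 < t \<Longrightarrow>
  (Suc (a-1) \<in> {a} \<union> {b}) = ((t \<le> a-1 \<and> Suc(a-1-t) \<in> {a}) \<noteq> (Suc(a-1+s) \<in> {b})) \<Longrightarrow>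
  (Suc (b-1) \<in> {a} \<union> {b}) = ((t \<le> b-1 \<and> Suc(b-1-t) \<in> {a}) \<noteq> (Suc(b-1+s) \<in> {b})) \<Longrightarrow>
  s = t \<and> b = a + s"
  apply simp
  apply arith
  done

lemma RS: "1 \<le> (a::nat) \<Longrightarrow> a < b \<Longrightarrow> 0 < s \<Longrightarrow> 0 < t \<Longrightarrow>
  (Suc (a-1) \<in> {a} \<union> {b, Suc b}) = ((t \<le> a-1 \<and> Suc(a-1-t) \<in> {a}) \<noteq> (Suc(a-1+s) \<in> {b, Suc b})) \<Longrightarrow>
  (Suc a \<in> {a} \<union> {b, Suc b}) = ((t \<le> a \<and> Suc(a-t) \<in> {a}) \<noteq> (Suc(a+s) \<in> {b, Suc b})) \<Longrightarrow>
  (Suc (b-1) \<in> {a} \<union> {b, Suc b}) = ((t \<le> b-1 \<and> Suc(b-1-t) \<in> {a}) \<noteq> (Suc(b-1+s) \<in> {b, Suc b})) \<Longrightarrow>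
  (Suc b \<in> {a} \<union> {b, Suc b}) = ((t \<le> b \<and> Suc(b-t) \<in> {a}) \<noteq> (Suc(b+s) \<in> {b, Suc b})) \<Longrightarrow>
  F (s+(b-1)) = (F (b-1) \<noteq> (t \<le> b-1 \<and> Suc(b-1-t) \<in> {a})) \<Longrightarrow>
  F (b - 1) \<noteq> F b \<Longrightarrow> False"
proof -
  assume a: "1 \<le> a" "a < b" "0 < s" "0 < t" and S1: "(Suc (a-1) \<in> {a} \<union> {b, Suc b}) = ((t \<le> a-1 \<and> Suc(a-1-t) \<in> {a}) \<noteq> (Suc(a-1+s) \<in> {b, Suc b}))"
   and S3: "(Suc (b-1) \<in> {a} \<union> {b, Suc b}) = ((t \<le> b-1 \<and> Suc(b-1-t) \<in> {a}) \<noteq> (Suc(b-1+s) \<in> {b, Suc b}))"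
   and S4: "(Suc b \<in> {a} \<union> {b, Suc b}) = ((t \<le> b \<and> Suc(b-t) \<in> {a}) \<noteq> (Suc(b+s) \<in> {b, Suc b}))"
   and E: "F (s+(b-1)) = (F (b-1) \<noteq> (t \<le> b-1 \<and> Suc(b-1-t) \<in> {a}))" and D: "F (b - 1) \<noteq> F b"
  have n1: "\<not> (t \<le> a-1 \<and> Suc(a-1-t) \<in> {a})" using a by auto
  have h1: "a + s = b \<or> a + s = Suc b" using S1 n1 a by auto
  have n2: "Suc(b+s) \<notin> {b, Suc b}" using a by auto
  have h2: "t \<le> b \<and> Suc(b-t) = a" using S4 n2 by auto
  have n3: "\<not> (t \<le> b-1 \<and> Suc(b-1-t) \<in> {a})" using h2 a by auto
  have h3: "Suc(b-1+s) \<in> {b, Suc b}" using S3 n3 a by auto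
  have s1: "s = 1" using h3 a by auto
  have "b = Suc a" using h1 s1 a by auto
  hence "s + (b-1) = b" using s1 by simp
  thus False using E n3 D by auto
qed
lemma SR: "1 \<le> (a::nat) \<Longrightarrow> a < b \<Longrightarrow> 0 < s \<Longrightarrow> 0 < t \<Longrightarrow> b \<noteq> Suc a \<Longrightarrow>
  (Suc (a-1) \<in> {a, Suc a} \<union> {b}) = ((t \<le> a-1 \<and> Suc(a-1-t) \<in> {a, Suc a}) \<noteq> (Suc(a-1+s) \<in> {b})) \<Longrightarrow>
  (Suc a \<in> {a, Suc a} \<union> {b}) = ((t \<le> a \<and> Suc(a-t) \<in> {a, Suc a}) \<noteq> (Suc(a+s) \<in> {b})) \<Longrightarrow>
  (Suc (b-1) \<in> {a, Suc a} \<union> {b}) = ((t \<le> b-1 \<and> Suc(b-1-t) \<in> {a, Suc a}) \<noteq> (Suc(b-1+s) \<in> {b})) \<Longrightarrow>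
  F (t+(a-1)) = (F (a-1) \<noteq> (Suc (a-1) \<in> {b})) \<Longrightarrow>
  F (a - 1) \<noteq> F a \<Longrightarrow> False"
proof -
  assume a: "1 \<le> a" "a < b" "0 < s" "0 < t" "b \<noteq> Suc a" and S1: "(Suc (a-1) \<in> {a, Suc a} \<union> {b}) = ((t \<le> a-1 \<and> Suc(a-1-t) \<in> {a, Suc a}) \<noteq> (Suc(a-1+s) \<in> {b}))"
   and S2: "(Suc a \<in> {a, Suc a} \<union> {b}) = ((t \<le> a \<and> Suc(a-t) \<in> {a, Suc a}) \<noteq> (Suc(a+s) \<in> {b}))"
   and S3: "(Suc (b-1) \<in> {a, Suc a} \<union> {b}) = ((t \<le> b-1 \<and> Suc(b-1-t) \<in> {a, Suc a}) \<noteq> (Suc(b-1+s) \<in> {b}))"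
   and E: "F (t+(a-1)) = (F (a-1) \<noteq> (Suc (a-1) \<in> {b}))" and D: "F (a - 1) \<noteq> F a"
  have n1: "\<not> (t \<le> a-1 \<and> Suc(a-1-t) \<in> {a, Suc a})" using a by auto
  have h1: "a + s = b" using S1 n1 a by auto
  have n3: "Suc(b-1+s) \<notin> {b}" using a by auto
  have h3: "t \<le> b-1 \<and> Suc(b-1-t) \<in> {a, Suc a}" using S3 n3 a by auto
  have n2: "Suc(a+s) \<notin> {b}" using h1 by auto
  have h2: "t \<le> a \<and> Suc(a-t) \<in> {a, Suc a}" using S2 n2 by auto
  have t1: "t = 1" using h2 a by auto
  have "Suc (a-1) \<notin> {b}" using a by auto
  thus False using E D t1 a by auto
qed
lemma SS: "1 \<le> (a::nat) \<Longrightarrow> Suc a < b \<Longrightarrow> 0 < s \<Longrightarrow> 0 < t \<Longrightarrow>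
  (Suc (a-1) \<in> {a, Suc a} \<union> {b, Suc b}) = ((t \<le> a-1 \<and> Suc(a-1-t) \<in> {a, Suc a}) \<noteq> (Suc(a-1+s) \<in> {b, Suc b})) \<Longrightarrow>
  (Suc a \<in> {a, Suc a} \<union> {b, Suc b}) = ((t \<le> a \<and> Suc(a-t) \<in> {a, Suc a}) \<noteq> (Suc(a+s) \<in> {b, Suc b})) \<Longrightarrow>
  (Suc (b-1) \<in> {a, Suc a} \<union> {b, Suc b}) = ((t \<le> b-1 \<and> Suc(b-1-t) \<in> {a, Suc a}) \<noteq> (Suc(b-1+s) \<in> {b, Suc b})) \<Longrightarrow>
  (Suc b \<in> {a, Suc a} \<union> {b, Suc b}) = ((t \<le> b \<and> Suc(b-t) \<in> {a, Suc a}) \<noteq> (Suc(b+s) \<in> {b, Suc b})) \<Longrightarrow>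
  s = t \<and> b = a + s"
proof -
  assume a: "1 \<le> a" "Suc a < b" "0 < s" "0 < t" and S1: "(Suc (a-1) \<in> {a, Suc a} \<union> {b, Suc b}) = ((t \<le> a-1 \<and> Suc(a-1-t) \<in> {a, Suc a}) \<noteq> (Suc(a-1+s) \<in> {b, Suc b}))"
   and S2: "(Suc a \<in> {a, Suc a} \<union> {b, Suc b}) = ((t \<le> a \<and> Suc(a-t) \<in> {a, Suc a}) \<noteq> (Suc(a+s) \<in> {b, Suc b}))"
   and S3: "(Suc (b-1) \<in> {a, Suc a} \<union> {b, Suc b}) = ((t \<le> b-1 \<and> Suc(b-1-t) \<in> {a, Suc a}) \<noteq> (Suc(b-1+s) \<in> {b, Suc b}))"
   and S4: "(Suc b \<in> {a, Suc a} \<union> {b, Suc b}) = ((t \<le> b \<and> Suc(b-t) \<in> {a, Suc a}) \<noteq> (Suc(b+s) \<in> {b, Suc b}))"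
  have n1: "\<not> (t \<le> a-1 \<and> Suc(a-1-t) \<in> {a, Suc a})" using a by auto
  have h1: "a + s = b \<or> a + s = Suc b" using S1 n1 a by auto
  have n4: "Suc(b+s) \<notin> {b, Suc b}" using a by auto
  have h4: "t \<le> b \<and> (b - t = a \<or> Suc (b - t) = a)" using S4 n4 by auto
  show ?thesis
  proof (cases "a + s = b")
    case True
    show ?thesis
    proof (cases "b - t = a")
      case True thus ?thesis using \<open>a + s = b\<close> h4 by auto
    next
      case False
      hence bt: "Suc (b - t) = a" using h4 by auto
      have "Suc(b-1+s) \<notin> {b, Suc b}" using a \<open>a + s = b\<close> by auto
      moreover have "\<not> (t \<le> b-1 \<and> Suc(b-1-t) \<in> {a, Suc a})" using bt h4 a by auto
      ultimately show ?thesis using S3 a by auto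
    qed
  next
    case False
    hence as: "a + s = Suc b" using h1 by auto
    have "Suc(a+s) \<notin> {b, Suc b}" using as by auto
    hence "t \<le> a \<and> Suc(a-t) \<in> {a, Suc a}" using S2 a by auto
    hence "t = 1" using a by auto
    thus ?thesis using h4 a by auto
  qed
qed

lemma main:
  fixes f g :: "bool list" and r :: nat and Oi Oj :: tilde_op
  defines "n \<equiv> length f" and "l \<equiv> length f - r" and "i \<equiv> op_pos Oi" and "j \<equiv> op_pos Oj"
  assumes r1: "1 \<le> r" and rn: "r < n"
    and A: "\<forall>k<l. f!(r+k) = (f!k \<noteq> (Suc k \<in> touched Oi \<union> touched Oj))"
    and disj: "touched Oi \<inter> touched Oj = {}"
    and rng: "\<forall>p \<in> touched Oi \<union> touched Oj. 1 \<le> p \<and> p \<le> l"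
    and swi: "\<forall>p. Oi = Swp p \<longrightarrow> f!(p-1) \<noteq> f!p"
    and swj: "\<forall>p. Oj = Swp p \<longrightarrow> f!(p-1) \<noteq> f!p"
    and ij: "i < j"
    and glen: "length g = n"
    and gnth: "\<forall>k<n. g!k = (f!k \<noteq> (Suc k \<in> touched Oj))"
  shows "sublist f (take r f @ g) \<longleftrightarrow>
     ((is_rep Oi \<and> is_rep Oj) \<or> (is_swp Oi \<and> is_swp Oj)) \<and> even r \<and>
     j - i = r div 2 \<and>
     factor f i (i + r div 2 - 1) = factor f j (j + r div 2 - 1)"
proof -
  have iT: "i \<in> touched Oi" unfolding i_def by (rule pos_touched)
  have jT: "j \<in> touched Oj" unfolding j_def by (rule pos_touched)
  have il: "1 \<le> i" "i \<le> l" using rng iT by auto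
  have jl: "1 \<le> j" "j \<le> l" using rng jT by auto
  have Tib: "\<And>p. p \<in> touched Oi \<Longrightarrow> i \<le> p \<and> p \<le> Suc i" unfolding i_def by (rule touched_pos)
  have Tjb: "\<And>p. p \<in> touched Oj \<Longrightarrow> j \<le> p \<and> p \<le> Suc j" unfolding j_def by (rule touched_pos)
  have ln: "l = n - r" unfolding l_def n_def by simp
  show ?thesis
  proof
    assume "sublist f (take r f @ g)"
    then obtain ps ss where eq: "take r f @ g = ps @ f @ ss" by (auto simp: sublist_def)
    define s where "s = length ps"
    have lenb: "length (take r f @ g) = r + n" using rn glen n_def by simp
    have sle: "s \<le> r" using arg_cong[OF eq, of length] lenb s_def n_def by simp
    have hB: "\<forall>q<n. f!q = (if s+q<r then f!(s+q) else g!(s+q-r))"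
    proof (intro allI impI)
      fix q assume q: "q < n"
      have "(ps @ f @ ss) ! (s+q) = f!q" using q s_def n_def by (simp add: nth_append)
      moreover have "(take r f @ g) ! (s+q) = (if s+q<r then f!(s+q) else g!(s+q-r))"
        using rn n_def by (simp add: nth_append min_def)
      ultimately show "f!q = (if s+q<r then f!(s+q) else g!(s+q-r))" using eq by simp
    qed
    have iNj: "i \<notin> touched Oj" using iT disj by auto
    have sr: "s \<noteq> r"
    proof
      assume sr: "s = r"
      have q: "j - 1 < n" using jl ln rn by linarith
      hence "f!(j-1) = g!(r + (j-1) - r)" using hB sr by auto
      also have "\<dots> = g!(j-1)" by simp
      also have "\<dots> = (\<not> f!(j-1))" using gnth q jl jT by auto
      finally show False by simp
    qed
    have s0: "s \<noteq> 0"
    proof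
      assume s0: "s = 0"
      have q: "r + (i-1) < n" using il ln rn by linarith
      hence "f!(r+(i-1)) = g!(r + (i-1) - r)" using hB s0 by auto
      also have "\<dots> = g!(i-1)" by simp
      also have "\<dots> = f!(i-1)" using gnth iNj il q by auto
      finally have x: "f!(r+(i-1)) = f!(i-1)" .
      have "i - 1 < l" using il by linarith
      hence "f!(r+(i-1)) = (f!(i-1) \<noteq> (Suc (i-1) \<in> touched Oi \<union> touched Oj))" using A by blast
      thus False using x il iT by auto
    qed
    define t where "t = r - s"
    have t0: "0 < t" "t < r" "s + t = r" using sle sr s0 t_def by auto
    have Et: "\<forall>k. k < n - t \<longrightarrow> f!(t+k) = (f!k \<noteq> (Suc k \<in> touched Oj))"
    proof (intro allI impI)
      fix k assume k: "k < n - t"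
      have "f!(t+k) = g!(s+(t+k)-r)" using hB k t0 by auto
      also have "s+(t+k)-r = k" using t0 by simp
      finally show "f!(t+k) = (f!k \<noteq> (Suc k \<in> touched Oj))" using gnth k by auto
    qed
    have Cs: "\<forall>q<t. f!(s+q) = f!q" using hB t0 rn by auto
    have Es: "\<forall>k<n-s. f!(s+k) = (f!k \<noteq> (t \<le> k \<and> Suc(k-t) \<in> touched Oi))"
    proof (intro allI impI)
      fix k assume k: "k < n - s"
      show "f!(s+k) = (f!k \<noteq> (t \<le> k \<and> Suc(k-t) \<in> touched Oi))"
      proof (cases "k < t")
        case True thus ?thesis using Cs by auto
      next
        case False
        then obtain m where m: "k = t + m" by (metis le_add_diff_inverse not_less)
        have ml: "m < l" using k m t0 ln by auto
        have e1: "f!(s+k) = (f!m \<noteq> (Suc m \<in> touched Oi \<union> touched Oj))"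
          using A ml m t0 by (metis add.assoc)
        have mt: "m < n - t" using ml ln t0 by linarith
        have e2: "f!k = (f!m \<noteq> (Suc m \<in> touched Oj))" using Et[rule_format, OF mt] m by simp
        show ?thesis using e1 e2 m disj by auto
      qed
    qed
    have Star: "\<forall>k<l. (Suc k \<in> touched Oi \<union> touched Oj) = ((t \<le> k \<and> Suc(k-t) \<in> touched Oi) \<noteq> (Suc(k+s) \<in> touched Oj))"
    proof (intro allI impI)
      fix k assume k: "k < l"
      have "f!(r+k) = f!(t+(s+k))" using t0 by (simp add: add.commute add.left_commute)
      also have "\<dots> = (f!(s+k) \<noteq> (Suc (s+k) \<in> touched Oj))" using Et k ln t0 by auto
      also have "\<dots> = ((f!k \<noteq> (t \<le> k \<and> Suc(k-t) \<in> touched Oi)) \<noteq> (Suc (s+k) \<in> touched Oj))"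
        using Es k ln t0 by auto
      finally show "(Suc k \<in> touched Oi \<union> touched Oj) = ((t \<le> k \<and> Suc(k-t) \<in> touched Oi) \<noteq> (Suc(k+s) \<in> touched Oj))"
        using A k by (auto simp: add.commute)
    qed
    have S1: "(Suc (i-1) \<in> touched Oi \<union> touched Oj) = ((t \<le> i-1 \<and> Suc(i-1-t) \<in> touched Oi) \<noteq> (Suc(i-1+s) \<in> touched Oj))"
      using il by (intro Star[rule_format]) linarith
    have S2: "(Suc i \<in> touched Oi \<union> touched Oj) = ((t \<le> i \<and> Suc(i-t) \<in> touched Oi) \<noteq> (Suc(i+s) \<in> touched Oj))"
      using il ij jl by (intro Star[rule_format]) linarith
    have S3: "(Suc (j-1) \<in> touched Oi \<union> touched Oj) = ((t \<le> j-1 \<and> Suc(j-1-t) \<in> touched Oi) \<noteq> (Suc(j-1+s) \<in> touched Oj))"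
      using jl by (intro Star[rule_format]) linarith
    have S4: "j < l \<Longrightarrow> (Suc j \<in> touched Oi \<union> touched Oj) = ((t \<le> j \<and> Suc(j-t) \<in> touched Oi) \<noteq> (Suc(j+s) \<in> touched Oj))"
      by (intro Star[rule_format])
    have E1: "f!(s+(j-1)) = (f!(j-1) \<noteq> (t \<le> j-1 \<and> Suc(j-1-t) \<in> touched Oi))"
      using jl ln t0 rn by (intro Es[rule_format]) linarith
    have E2: "f!(t+(i-1)) = (f!(i-1) \<noteq> (Suc (i-1) \<in> touched Oj))"
      using il ln t0 rn by (intro Et[rule_format]) linarith
    have key: "s = t \<and> j = i + s \<and> ((is_rep Oi \<and> is_rep Oj) \<or> (is_swp Oi \<and> is_swp Oj))"
    proof (cases Oi; cases Oj)
      fix a b assume o: "Oi = Rep a" "Oj = Rep b"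
      note X = S1 S3 il jl ij
      note Y = X[unfolded i_def j_def o touched.simps op_pos.simps]
      have "s = t \<and> b = a + s" by (rule RR[OF Y(3) Y(7) _ _ Y(1) Y(2)]) (use t0 s0 in auto)
      thus ?thesis using o unfolding i_def j_def by simp
    next
      fix a b assume o: "Oi = Rep a" "Oj = Swp b"
      have jl': "j < l" using rng o unfolding j_def by auto
      note X = S1 S2 S3 S4[OF jl'] E1 il jl ij
      note Y = X[unfolded i_def j_def o touched.simps op_pos.simps]
      have sw: "f!(b-1) \<noteq> f!b" using swj o by auto
      have False by (rule RS[of a b s t "\<lambda>k. f!k", OF Y(6) Y(10) _ _ Y(1) Y(2) Y(3) Y(4) Y(5) sw]) (use t0 s0 in auto)
      thus ?thesis ..
    next
      fix a b assume o: "Oi = Swp a" "Oj = Rep b"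
      have ne: "b \<noteq> Suc a" using disj o by auto
      note X = S1 S2 S3 E2 il jl ij
      note Y = X[unfolded i_def j_def o touched.simps op_pos.simps]
      have sw: "f!(a-1) \<noteq> f!a" using swi o by auto
      have False by (rule SR[of a b s t "\<lambda>k. f!k", OF Y(5) Y(9) _ _ ne Y(1) Y(2) Y(3) Y(4) sw]) (use t0 s0 in auto)
      thus ?thesis ..
    next
      fix a b assume o: "Oi = Swp a" "Oj = Swp b"
      have jl': "j < l" using rng o unfolding j_def by auto
      have ne: "Suc a < b" using disj o ij unfolding i_def j_def by auto
      note X = S1 S2 S3 S4[OF jl'] il jl ij
      note Y = X[unfolded i_def j_def o touched.simps op_pos.simps]
      have "s = t \<and> b = a + s" by (rule SS[OF Y(5) ne _ _ Y(1) Y(2) Y(3) Y(4)]) (use t0 s0 in auto)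
      thus ?thesis using o unfolding i_def j_def by simp
    qed
    have st: "s = t" and jis: "j = i + s" and ty: "(is_rep Oi \<and> is_rep Oj) \<or> (is_swp Oi \<and> is_swp Oj)"
      using key by auto
    have r2: "r = 2*s" using t0 st by simp
    have hs: "r div 2 = s" using r2 by simp
    have jn: "j - 1 + s \<le> n" using jl ln r2 by linarith
    have "take s (drop (i-1) f) = take s (drop (j-1) f)"
    proof (rule nth_equalityI)
      show "length (take s (drop (i-1) f)) = length (take s (drop (j-1) f))"
        using jn jis n_def by simp
    next
      fix q assume "q < length (take s (drop (i-1) f))"
      hence q: "q < s" by simp
      have q1: "i - 1 + q < n" using q jn jis by linarith
      have q2: "j - 1 + q < n" using q jn by linarith
      have "take s (drop (i-1) f) ! q = f!(i-1+q)" using q q1 n_def by simp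
      moreover have "take s (drop (j-1) f) ! q = f!(j-1+q)" using q q2 n_def by simp
      moreover have "f!(j-1+q) = f!(t + (i-1+q))" using jis st il by (simp add: algebra_simps)
      moreover have "f!(t + (i-1+q)) = (f!(i-1+q) \<noteq> (Suc (i-1+q) \<in> touched Oj))"
        using q q1 jn st jis il by (intro Et[rule_format]) linarith
      moreover have "Suc (i-1+q) \<notin> touched Oj" using Tjb q jis il by fastforce
      ultimately show "take s (drop (i-1) f) ! q = take s (drop (j-1) f) ! q" by simp
    qed
    moreover have "Suc (i + s - 1) - i = s" using il t0 by simp
    moreover have "Suc (j + s - 1) - j = s" using jl t0 by simp
    ultimately have "factor f i (i + r div 2 - 1) = factor f j (j + r div 2 - 1)"
      unfolding factor_def hs by simp
    thus "((is_rep Oi \<and> is_rep Oj) \<or> (is_swp Oi \<and> is_swp Oj)) \<and> even r \<and>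
     j - i = r div 2 \<and>
     factor f i (i + r div 2 - 1) = factor f j (j + r div 2 - 1)"
      using ty r2 hs jis by simp
  next
    assume C: "((is_rep Oi \<and> is_rep Oj) \<or> (is_swp Oi \<and> is_swp Oj)) \<and> even r \<and>
     j - i = r div 2 \<and>
     factor f i (i + r div 2 - 1) = factor f j (j + r div 2 - 1)"
    define h where "h = r div 2"
    have r2: "r = 2*h" using C h_def by auto
    have h1: "1 \<le> h" using r2 r1 by linarith
    have jih: "j = i + h" using C h_def ij by linarith
    have shift: "\<And>p. (p + h \<in> touched Oj) = (p \<in> touched Oi)"
      using C jih unfolding i_def j_def by (cases Oi; cases Oj) auto
    have fac: "\<forall>q<h. f!(i-1+q) = f!(j-1+q)"
    proof (intro allI impI)
      fix q assume q: "q < h"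
      have jn: "j - 1 + h \<le> n" using jl ln r2 by linarith
      have s1: "Suc (i + h - 1) - i = h" using il h1 by simp
      have s2: "Suc (j + h - 1) - j = h" using jl h1 by simp
      have e: "take h (drop (i-1) f) = take h (drop (j-1) f)"
        using C unfolding factor_def h_def[symmetric] s1 s2 by simp
      have q1: "i - 1 + q < n" using q jn jih by linarith
      have q2: "j - 1 + q < n" using q jn by linarith
      have "take h (drop (i-1) f) ! q = f!(i-1+q)" using q q1 n_def by simp
      moreover have "take h (drop (j-1) f) ! q = f!(j-1+q)" using q q2 n_def by simp
      ultimately show "f!(i-1+q) = f!(j-1+q)" using e by simp
    qed
    have Up: "\<And>m. i - 1 + m < n - h \<Longrightarrow> f!(h+(i-1+m)) = (f!(i-1+m) \<noteq> (Suc (i-1+m) \<in> touched Oj))"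
    proof -
      fix m show "i - 1 + m < n - h \<Longrightarrow> f!(h+(i-1+m)) = (f!(i-1+m) \<noteq> (Suc (i-1+m) \<in> touched Oj))"
      proof (induction m rule: less_induct)
        case (less m)
        show ?case
        proof (cases "m < h")
          case True
          have "f!(h+(i-1+m)) = f!(j-1+m)" using jih il by (simp add: algebra_simps)
          also have "\<dots> = f!(i-1+m)" using fac True by simp
          finally show ?thesis using Tjb True jih il by fastforce
        next
          case False
          then obtain m' where m': "m = h + m'" by (metis le_add_diff_inverse not_less)
          have mm: "m' < m" using m' h1 by simp
          have lt: "i - 1 + m' < n - h" using less.prems m' by linarith
          have IH: "f!(h+(i-1+m')) = (f!(i-1+m') \<noteq> (Suc (i-1+m') \<in> touched Oj))"
            using less.IH[OF mm lt] .
          have kl: "i - 1 + m' < l" using less.prems m' ln r2 by linarith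
          have Ak: "f!(r+(i-1+m')) = (f!(i-1+m') \<noteq> (Suc (i-1+m') \<in> touched Oi \<union> touched Oj))"
            using A kl by blast
          have e1: "h+(i-1+m) = r+(i-1+m')" using m' r2 by simp
          have e2: "i-1+m = h+(i-1+m')" using m' by simp
          have e3: "(Suc (i-1+m) \<in> touched Oj) = (Suc (i-1+m') \<in> touched Oi)"
            using shift[of "Suc (i-1+m')"] e2 by (simp add: ac_simps)
          have y: "f!(i-1+m) = f!(h+(i-1+m'))" using e2 by (simp only:)
          show ?thesis unfolding e1 y e3 using Ak IH disj by auto
        qed
      qed
    qed
    have Down: "\<And>k. k < i - 1 \<Longrightarrow> f!(h+k) = (f!k \<noteq> (Suc k \<in> touched Oj))"
    proof -
      fix k show "k < i - 1 \<Longrightarrow> f!(h+k) = (f!k \<noteq> (Suc k \<in> touched Oj))"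
      proof (induction "i - 1 - k" arbitrary: k rule: less_induct)
        case less
        have kl: "k < l" using less.prems il by linarith
        have nD: "Suc k \<notin> touched Oi \<union> touched Oj" using Tib Tjb less.prems ij by fastforce
        have Ak: "f!(r+k) = f!k" using A kl nD by auto
        have nj: "Suc (h+k) \<notin> touched Oj" using Tjb less.prems jih by fastforce
        have hh: "f!(h+(h+k)) = f!(h+k)"
        proof (cases "i - 1 \<le> h + k")
          case True
          then obtain m where m: "h + k = i - 1 + m" by (metis le_add_diff_inverse)
          have "i - 1 + m < n - h" using m less.prems il ln r2 by linarith
          from Up[OF this] show ?thesis using m nj by simp
        next
          case False
          have "i - 1 - (h+k) < i - 1 - k" using False h1 by linarith
          from less.hyps[OF this] False show ?thesis using nj by simp
        qed
        have "f!(h+k) = f!k" using hh Ak r2 by (simp add: add.assoc mult_2)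
        thus ?case using nD by simp
      qed
    qed
    have Eh: "\<forall>k<n-h. f!(h+k) = (f!k \<noteq> (Suc k \<in> touched Oj))"
    proof (intro allI impI)
      fix k assume k: "k < n - h"
      show "f!(h+k) = (f!k \<noteq> (Suc k \<in> touched Oj))"
      proof (cases "k < i - 1")
        case True thus ?thesis by (rule Down)
      next
        case False
        then obtain m where m: "k = i - 1 + m" by (metis le_add_diff_inverse not_less)
        show ?thesis using Up[of m] k m by simp
      qed
    qed
    define \<beta> where "\<beta> = take r f @ g"
    have lb: "length \<beta> = r + n" using rn glen n_def \<beta>_def by simp
    have bn: "\<And>k. k < r + n \<Longrightarrow> \<beta>!k = (if k < r then f!k else g!(k-r))"
      using rn n_def \<beta>_def by (simp add: nth_append min_def)
    have tk: "take n (drop h \<beta>) = f"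
    proof (rule nth_equalityI)
      show "length (take n (drop h \<beta>)) = length f" using lb r2 n_def by simp
    next
      fix q assume "q < length (take n (drop h \<beta>))"
      hence q: "q < n" using lb r2 by simp
      have "take n (drop h \<beta>) ! q = \<beta>!(h+q)" using q lb r2 by simp
      also have "\<dots> = f!q"
      proof (cases "h + q < r")
        case True
        hence qh: "q < h" using r2 by simp
        have "q < n - h" using qh rn r2 by linarith
        hence "f!(h+q) = (f!q \<noteq> (Suc q \<in> touched Oj))" using Eh by blast
        moreover have "Suc q \<notin> touched Oj" using Tjb qh jih il by fastforce
        ultimately show ?thesis using bn True q by simp
      next
        case False
        hence "h \<le> q" using r2 by simp
        then obtain q' where q': "q = h + q'" by (metis le_add_diff_inverse)
        have hq: "h + q - r = q'" using q' r2 by simp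
        have q'n: "q' < n - h" using q q' by linarith
        have hqn: "h + q < r + n" using q r2 by linarith
        have "\<beta>!(h+q) = g!q'" using bn[OF hqn] False hq by simp
        also have "\<dots> = (f!q' \<noteq> (Suc q' \<in> touched Oj))" using gnth q'n by auto
        also have "\<dots> = f!(h+q')" using Eh q'n by auto
        finally show ?thesis using q' by simp
      qed
      finally show "take n (drop h \<beta>) ! q = f ! q" .
    qed
    have "\<beta> = take h \<beta> @ f @ drop (h + n) \<beta>"
    proof -
      have "\<beta> = take h \<beta> @ drop h \<beta>" by simp
      also have "drop h \<beta> = take n (drop h \<beta>) @ drop n (drop h \<beta>)" by (rule append_take_drop_id[symmetric])
      finally show ?thesis using tk by (simp add: add.commute)
    qed
    thus "sublist f (take r f @ g)" unfolding sublist_def \<beta>_def[symmetric] by blast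
  qed
qed


lemma take_defined: "op_defined (take l f) oo \<Longrightarrow> op_defined f oo"
  by (cases oo) auto

lemma two_ops:
  assumes d1: "op_defined u O1" and d2: "op_defined (apply_op u O1) O2"
    and dj: "touched O1 \<inter> touched O2 = {}"
  shows "op_defined u O2 \<and> length (apply_op (apply_op u O1) O2) = length u \<and>
    (\<forall>k<length u. apply_op (apply_op u O1) O2 ! k = (u!k \<noteq> (Suc k \<in> touched O1 \<union> touched O2)))"
proof -
  have l1: "length (apply_op u O1) = length u" by (rule apply_op_len)
  have n1: "\<And>k. k < length u \<Longrightarrow> apply_op u O1 ! k = (u!k \<noteq> (Suc k \<in> touched O1))"
    using apply_op_nth[OF d1] by auto
  have "op_defined u O2"
  proof (rule op_defined_transfer[OF d2])
    show "length u = length (apply_op u O1)" using l1 by simp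
    show "\<forall>p\<in>touched O2. u ! (p - 1) = apply_op u O1 ! (p - 1)"
    proof
      fix p assume p: "p \<in> touched O2"
      have "1 \<le> p \<and> p \<le> length u" using touched_range[OF d2 p] l1 by simp
      moreover have "Suc (p - 1) \<notin> touched O1" using p dj calculation by auto
      moreover have "p - 1 < length u" using calculation by linarith
      ultimately show "u ! (p - 1) = apply_op u O1 ! (p - 1)" using n1[of "p-1"] by simp
    qed
  qed
  moreover have "length (apply_op (apply_op u O1) O2) = length u" using l1 apply_op_len by simp
  moreover have "\<forall>k<length u. apply_op (apply_op u O1) O2 ! k = (u!k \<noteq> (Suc k \<in> touched O1 \<union> touched O2))"
  proof (intro allI impI)
    fix k assume k: "k < length u"
    have "apply_op (apply_op u O1) O2 ! k = (apply_op u O1 ! k \<noteq> (Suc k \<in> touched O2))"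
      using apply_op_nth[OF d2] k l1 by auto
    thus "apply_op (apply_op u O1) O2 ! k = (u!k \<noteq> (Suc k \<in> touched O1 \<union> touched O2))"
      using n1[OF k] dj by auto
  qed
  ultimately show ?thesis by blast
qed

theorem lemma4:
  fixes f :: "bool list" and r :: nat and Oi Oj :: tilde_op and ops :: "tilde_op list"
  assumes "1 \<le> r" and "r < length f"
    and "dist_tilde (pre (length f - r) f) (suf (length f - r) f) = 2"
    and "minimal_tilde_transf (pre (length f - r) f) (suf (length f - r) f) ops"
    and "ops = [Oi, Oj] \<or> ops = [Oj, Oi]"
    and "op_pos Oi < op_pos Oj"
  shows "(\<not> free f (pre r f @ apply_op f Oj)) \<longleftrightarrow>
     ((is_rep Oi \<and> is_rep Oj) \<or> (is_swp Oi \<and> is_swp Oj)) \<and> even r \<and>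
     op_pos Oj - op_pos Oi = r div 2 \<and>
     factor f (op_pos Oi) (op_pos Oi + r div 2 - 1) = factor f (op_pos Oj) (op_pos Oj + r div 2 - 1)"
proof -
  define l where "l = length f - r"
  define u where "u = take l f"
  define v where "v = drop r f"
  have lu: "length u = l" using assms(2) l_def u_def by simp
  have pu: "pre (length f - r) f = u" unfolding pre_def u_def l_def ..
  have sv: "suf (length f - r) f = v" unfolding suf_def v_def using assms(2) by simp
  have M: "minimal_tilde_transf u v ops" using assms(4) pu sv by simp
  have aps: "apply_seq u ops v" using M unfolding minimal_tilde_transf_def by blast
  have dall: "\<forall>a < length ops. \<forall>b < length ops. a \<noteq> b \<longrightarrow> touched (ops ! a) \<inter> touched (ops ! b) = {}"
    using M unfolding minimal_tilde_transf_def by blast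
  have l2: "length ops = 2" using assms(5) by auto
  have dj0: "touched (ops!0) \<inter> touched (ops!1) = {}"
    using dall l2 by simp
  have dj: "touched Oi \<inter> touched Oj = {}" using dj0 assms(5) by auto
  have X: "op_defined u Oi \<and> op_defined u Oj \<and> length v = length u \<and>
    (\<forall>k<length u. v ! k = (u!k \<noteq> (Suc k \<in> touched Oi \<union> touched Oj)))"
    using assms(5)
  proof
    assume o: "ops = [Oi, Oj]"
    hence d1: "op_defined u Oi" and d2: "op_defined (apply_op u Oi) Oj"
      and vv: "v = apply_op (apply_op u Oi) Oj" using aps by auto
    show ?thesis using two_ops[OF d1 d2 dj] d1 vv by simp
  next
    assume o: "ops = [Oj, Oi]"
    have dj': "touched Oj \<inter> touched Oi = {}" using dj by auto
    from o have d1: "op_defined u Oj" and d2: "op_defined (apply_op u Oj) Oi"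
      and vv: "v = apply_op (apply_op u Oj) Oi" using aps by auto
    show ?thesis using two_ops[OF d1 d2 dj'] d1 vv by auto
  qed
  have A: "\<forall>k<length f - r. f!(r+k) = (f!k \<noteq> (Suc k \<in> touched Oi \<union> touched Oj))"
  proof (intro allI impI)
    fix k assume k: "k < length f - r"
    have "v!k = f!(r+k)" using k v_def assms(2) by simp
    moreover have "u!k = f!k" using k u_def l_def by simp
    ultimately show "f!(r+k) = (f!k \<noteq> (Suc k \<in> touched Oi \<union> touched Oj))"
      using X k lu l_def by auto
  qed
  have rng: "\<forall>p \<in> touched Oi \<union> touched Oj. 1 \<le> p \<and> p \<le> length f - r"
    using touched_range[of u Oi] touched_range[of u Oj] X lu l_def by auto
  have sw: "\<And>oo p. op_defined u oo \<Longrightarrow> oo = Swp p \<Longrightarrow> f!(p-1) \<noteq> f!p"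
    using lu u_def by auto
  have swi: "\<forall>p. Oi = Swp p \<longrightarrow> f!(p-1) \<noteq> f!p" using sw X by blast
  have swj: "\<forall>p. Oj = Swp p \<longrightarrow> f!(p-1) \<noteq> f!p" using sw X by blast
  have dfj: "op_defined f Oj" using X u_def take_defined by blast
  have gnth: "\<forall>k<length f. apply_op f Oj ! k = (f!k \<noteq> (Suc k \<in> touched Oj))"
    using apply_op_nth[OF dfj] by auto
  have "sublist f (take r f @ apply_op f Oj) \<longleftrightarrow>
     ((is_rep Oi \<and> is_rep Oj) \<or> (is_swp Oi \<and> is_swp Oj)) \<and> even r \<and>
     op_pos Oj - op_pos Oi = r div 2 \<and>
     factor f (op_pos Oi) (op_pos Oi + r div 2 - 1) = factor f (op_pos Oj) (op_pos Oj + r div 2 - 1)"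
    by (rule main[OF assms(1) assms(2) A dj rng swi swj assms(6) apply_op_len gnth])
  thus ?thesis unfolding free_def pre_def by blast
qed

end
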